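(* For every $\mu>0$: (i) $q_\mu:\mathbb{R}^n\to\mathbb{R}\cup\{\infty\}$ is proper and lower semicontinuous, with $\operatorname{dom} q_\mu=\operatorname{dom} g\cap\{z : c(z)<0\}$ and $\inf q_\mu\in\mathbb{R}$; (ii) $f_\mu$ has locally Lipschitz continuous gradient on $\operatorname{dom} f_\mu=\{z : c(z)<0\}$.
   Context: Let $f:\mathbb{R}^n\to\mathbb{R}$ have locally Lipschitz continuous gradient; let $g:\mathbb{R}^n\to\mathbb{R}\cup\{\infty\}$ be proper, lower semicontinuous, prox-bounded (i.e. $g+\frac{1}{2\gamma}\|\cdot\|^2$ is bounded below for some $\gamma>0$), and continuous relative to $\operatorname{dom} g$ (whenever $\operatorname{dom} g\ni x^k\to x$ one has $g(x^k)\to g(x)$); let $c:\mathbb{R}^n\to\mathbb{R}^m$ have locally Lipschitz continuous Jacobian. Let $q=f+g$, assume $\inf\{q(x): c(x)\le 0\}\in\mathbb{R}$ and that $F=\operatorname{dom} q\cap\{x: c(x)<0\}\neq\emptyset$. Let $b:\mathbb{R}\to[0,\infty]$ satisfy $\operatorname{dom} b=(-\infty,0)$, $b$ twice continuously differentiable with $b'>0$ on $(-\infty,0)$, and $b(t)\to\infty$ as $t\to0^-$. For $\mu>0$ define $f_\mu(z)=f(z)+\mu\sum_{i=1}^m b(c_i(z))$ (equal to $\infty$ unless $c(z)<0$) and $q_\mu=f_\mu+g$. *)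

theory Defs
  imports "HOL-Analysis.Analysis"
begin

text \<open>Extended-real-valued functions R^n -> R \<union> {\<infinity>} are modelled as maps into ereal.\<close>

definition edom :: "('a \<Rightarrow> ereal) \<Rightarrow> 'a set" where
  "edom h = {x. h x \<noteq> \<infinity>}"

definition proper_fun :: "('a \<Rightarrow> ereal) \<Rightarrow> bool" where
  "proper_fun h \<longleftrightarrow> (\<forall>x. h x \<noteq> -\<infinity>) \<and> (\<exists>x. h x \<noteq> \<infinity>)"

definition lsc_fun :: "('a::topological_space \<Rightarrow> ereal) \<Rightarrow> bool" where
  "lsc_fun h \<longleftrightarrow> (\<forall>x. h x \<le> Liminf (at x) h)"

definition loc_lipschitz_on :: "'a::metric_space set \<Rightarrow> ('a \<Rightarrow> 'b::metric_space) \<Rightarrow> bool" where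
  "loc_lipschitz_on S G \<longleftrightarrow>
     (\<forall>x\<in>S. \<exists>e>0. \<exists>L. lipschitz_on L (ball x e \<inter> S) G)"

definition loc_lip_gradient_on :: "('a::real_inner set) \<Rightarrow> ('a \<Rightarrow> real) \<Rightarrow> bool" where
  "loc_lip_gradient_on S h \<longleftrightarrow>
     (\<exists>G. (\<forall>x\<in>S. (h has_derivative (\<lambda>v. G x \<bullet> v)) (at x)) \<and> loc_lipschitz_on S G)"

definition loc_lip_jacobian :: "(real^'n \<Rightarrow> real^'m) \<Rightarrow> bool" where
  "loc_lip_jacobian c \<longleftrightarrow>
     (\<exists>J :: real^'n \<Rightarrow> real^'n^'m.
        (\<forall>x. (c has_derivative (\<lambda>v. J x *v v)) (at x)) \<and> loc_lipschitz_on UNIV J)"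

definition f_mu :: "(real^'n \<Rightarrow> real) \<Rightarrow> (real \<Rightarrow> ereal) \<Rightarrow> (real^'n \<Rightarrow> real^'m) \<Rightarrow> real
                     \<Rightarrow> real^'n \<Rightarrow> ereal" where
  "f_mu f b c \<mu> z = ereal (f z) + ereal \<mu> * (\<Sum>i\<in>UNIV. b (c z $ i))"

definition q_mu :: "(real^'n \<Rightarrow> real) \<Rightarrow> (real^'n \<Rightarrow> ereal) \<Rightarrow> (real \<Rightarrow> ereal)
                     \<Rightarrow> (real^'n \<Rightarrow> real^'m) \<Rightarrow> real \<Rightarrow> real^'n \<Rightarrow> ereal" where
  "q_mu f g b c \<mu> z = f_mu f b c \<mu> z + g z"

end

theory Submission
  imports Defs
begin

lemma ll_add:
  fixes F G :: "'a::metric_space \<Rightarrow> 'b::real_normed_vector"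
  assumes "loc_lipschitz_on S F" "loc_lipschitz_on S G"
  shows "loc_lipschitz_on S (\<lambda>x. F x + G x)"
  unfolding loc_lipschitz_on_def
proof
  fix x assume x: "x \<in> S"
  obtain e1 L1 where e1: "e1 > 0" "lipschitz_on L1 (ball x e1 \<inter> S) F"
    using assms(1) x unfolding loc_lipschitz_on_def by blast
  obtain e2 L2 where e2: "e2 > 0" "lipschitz_on L2 (ball x e2 \<inter> S) G"
    using assms(2) x unfolding loc_lipschitz_on_def by blast
  have s1: "ball x (min e1 e2) \<inter> S \<subseteq> ball x e1 \<inter> S" and s2: "ball x (min e1 e2) \<inter> S \<subseteq> ball x e2 \<inter> S"
    by auto
  have "lipschitz_on (L1 + L2) (ball x (min e1 e2) \<inter> S) (\<lambda>x. F x + G x)"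
    by (rule lipschitz_on_add[OF lipschitz_on_subset[OF e1(2) s1] lipschitz_on_subset[OF e2(2) s2]])
  then show "\<exists>e>0. \<exists>L. lipschitz_on L (ball x e \<inter> S) (\<lambda>x. F x + G x)"
    using e1 e2 by (intro exI[of _ "min e1 e2"]) auto
qed

lemma ll_const: "loc_lipschitz_on (S::'a::metric_space set) (\<lambda>x. c)"
  unfolding loc_lipschitz_on_def
proof
  fix x :: 'a assume "x \<in> S"
  have "lipschitz_on 0 (ball x 1 \<inter> S) (\<lambda>x. c)" by (rule lipschitz_on_constant)
  then show "\<exists>e>0. \<exists>L. lipschitz_on L (ball x e \<inter> S) (\<lambda>x. c)" by (intro exI[of _ 1]) auto
qed

lemma ll_sum:
  fixes F :: "'i \<Rightarrow> 'a::metric_space \<Rightarrow> 'b::real_normed_vector"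
  assumes "finite I" "\<And>i. i \<in> I \<Longrightarrow> loc_lipschitz_on S (F i)"
  shows "loc_lipschitz_on S (\<lambda>x. \<Sum>i\<in>I. F i x)"
  using assms
proof (induction I rule: finite_induct)
  case empty
  then show ?case by (simp add: ll_const)
next
  case (insert a I)
  then show ?case by (simp add: ll_add)
qed

lemma ll_subset:
  assumes "loc_lipschitz_on T F" "S \<subseteq> T"
  shows "loc_lipschitz_on S F"
  unfolding loc_lipschitz_on_def
proof
  fix x assume x: "x \<in> S"
  obtain e L where e: "e > 0" "lipschitz_on L (ball x e \<inter> T) F"
    using assms x unfolding loc_lipschitz_on_def by blast
  have "ball x e \<inter> S \<subseteq> ball x e \<inter> T" using assms(2) by auto
  then show "\<exists>e>0. \<exists>L. lipschitz_on L (ball x e \<inter> S) F"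
    using e lipschitz_on_subset by blast
qed

lemma ll_scaleR:
  fixes a :: "'a::metric_space \<Rightarrow> real" and V :: "'a \<Rightarrow> 'b::real_normed_vector"
  assumes "loc_lipschitz_on S a" "loc_lipschitz_on S V"
  shows "loc_lipschitz_on S (\<lambda>x. a x *\<^sub>R V x)"
  unfolding loc_lipschitz_on_def
proof
  fix x assume x: "x \<in> S"
  obtain e1 L1 where e1: "e1 > 0" "lipschitz_on L1 (ball x e1 \<inter> S) a"
    using assms(1) x unfolding loc_lipschitz_on_def by blast
  obtain e2 L2 where e2: "e2 > 0" "lipschitz_on L2 (ball x e2 \<inter> S) V"
    using assms(2) x unfolding loc_lipschitz_on_def by blast
  define e where "e = min e1 e2"
  define U where "U = ball x e \<inter> S"
  have l1: "lipschitz_on L1 U a" by (rule lipschitz_on_subset[OF e1(2)]) (auto simp: U_def e_def)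
  have l2: "lipschitz_on L2 U V" by (rule lipschitz_on_subset[OF e2(2)]) (auto simp: U_def e_def)
  have L1: "L1 \<ge> 0" using l1 lipschitz_on_nonneg by blast
  have L2: "L2 \<ge> 0" using l2 lipschitz_on_nonneg by blast
  have e: "e > 0" using e1 e2 by (simp add: e_def)
  have xU: "x \<in> U" using x e by (simp add: U_def)
  define A where "A = \<bar>a x\<bar> + L1 * e"
  define B where "B = norm (V x) + L2 * e"
  have bA: "\<bar>a y\<bar> \<le> A" if y: "y \<in> U" for y
  proof -
    have "dist (a y) (a x) \<le> L1 * dist y x" by (rule lipschitz_onD[OF l1 y xU])
    also have "\<dots> \<le> L1 * e" using y L1 by (intro mult_left_mono) (auto simp: U_def dist_commute)
    finally show ?thesis unfolding A_def dist_real_def by linarith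
  qed
  have bB: "norm (V y) \<le> B" if y: "y \<in> U" for y
  proof -
    have "dist (V y) (V x) \<le> L2 * dist y x" by (rule lipschitz_onD[OF l2 y xU])
    also have "\<dots> \<le> L2 * e" using y L2 by (intro mult_left_mono) (auto simp: U_def dist_commute)
    finally have "norm (V y - V x) \<le> L2 * e" by (simp add: dist_norm)
    moreover have "norm (V y) \<le> norm (V x) + norm (V y - V x)" by (metis norm_triangle_sub add.commute)
    ultimately show ?thesis unfolding B_def by linarith
  qed
  have A0: "A \<ge> 0" using L1 e by (simp add: A_def)
  have B0: "B \<ge> 0" using L2 e by (simp add: B_def)
  have "lipschitz_on (A * L2 + L1 * B) U (\<lambda>x. a x *\<^sub>R V x)"
  proof (rule lipschitz_onI)
    fix y z assume y: "y \<in> U" and z: "z \<in> U"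
    have eq: "a y *\<^sub>R V y - a z *\<^sub>R V z = a y *\<^sub>R (V y - V z) + (a y - a z) *\<^sub>R V z"
      by (simp add: algebra_simps)
    have "dist (a y *\<^sub>R V y) (a z *\<^sub>R V z) = norm (a y *\<^sub>R (V y - V z) + (a y - a z) *\<^sub>R V z)"
      by (simp add: dist_norm eq)
    also have "\<dots> \<le> \<bar>a y\<bar> * norm (V y - V z) + \<bar>a y - a z\<bar> * norm (V z)"
      by (rule order_trans[OF norm_triangle_ineq]) simp
    also have "\<dots> \<le> A * (L2 * dist y z) + (L1 * dist y z) * B"
    proof (rule add_mono)
      show "\<bar>a y\<bar> * norm (V y - V z) \<le> A * (L2 * dist y z)"
        using lipschitz_onD[OF l2 y z] bA[OF y]
        by (intro mult_mono) (auto simp: dist_norm A0)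
      show "\<bar>a y - a z\<bar> * norm (V z) \<le> (L1 * dist y z) * B"
        using lipschitz_onD[OF l1 y z] bB[OF z]
        by (intro mult_mono) (auto simp: dist_real_def)
    qed
    also have "\<dots> = (A * L2 + L1 * B) * dist y z" by (simp add: algebra_simps)
    finally show "dist (a y *\<^sub>R V y) (a z *\<^sub>R V z) \<le> (A * L2 + L1 * B) * dist y z" .
  next
    show "0 \<le> A * L2 + L1 * B" using A0 B0 L1 L2 by simp
  qed
  then show "\<exists>e>0. \<exists>L. lipschitz_on L (ball x e \<inter> S) (\<lambda>x. a x *\<^sub>R V x)"
    using e unfolding U_def by blast
qed


lemma ll_bprime:
  fixes cj :: "real^'n \<Rightarrow> real" and a :: "real^'n \<Rightarrow> real^'n"
  assumes deriv: "\<And>x. (cj has_derivative (\<lambda>v. a x \<bullet> v)) (at x)"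
    and la: "loc_lipschitz_on UNIV a"
    and bd: "\<And>t. t < 0 \<Longrightarrow> (bp has_real_derivative bpp t) (at t)"
    and cont: "continuous_on {..<0} bpp"
  shows "loc_lipschitz_on {z. cj z < 0} (\<lambda>z. bp (cj z))"
  unfolding loc_lipschitz_on_def
proof
  fix x assume "x \<in> {z. cj z < 0}"
  then have t0: "cj x < 0" by simp
  define d where "d = - cj x / 2"
  have d: "d > 0" using t0 by (simp add: d_def)
  define K where "K = cball (cj x) d"
  have KS: "K \<subseteq> {..<0}"
  proof
    fix t assume "t \<in> K"
    then have "\<bar>cj x - t\<bar> \<le> d" by (simp add: K_def dist_real_def)
    then show "t \<in> {..<0}" using t0 by (simp add: d_def)
  qed
  have "compact (bpp ` K)"
    by (rule compact_continuous_image[OF continuous_on_subset[OF cont KS]]) (simp add: K_def)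
  then obtain M where M: "M > 0" "\<And>t. t \<in> K \<Longrightarrow> norm (bpp t) \<le> M"
    by (auto dest!: compact_imp_bounded simp: bounded_pos)
  have lipb: "lipschitz_on M K bp"
  proof (rule bounded_derivative_imp_lipschitz)
    show "(bp has_derivative (*) (bpp t)) (at t within K)" if "t \<in> K" for t
      using bd[of t] KS that by (auto simp: has_field_derivative_def intro: has_derivative_at_withinI)
    show "convex K" by (simp add: K_def)
    show "onorm ((*) (bpp t)) \<le> M" if "t \<in> K" for t
      by (rule onorm_le) (use M(2)[OF that] in \<open>simp add: abs_mult mult_right_mono\<close>)
    show "0 \<le> M" using M by simp
  qed
  obtain eJ LJ where eJ: "eJ > 0" "lipschitz_on LJ (ball x eJ \<inter> UNIV) a"
    using la unfolding loc_lipschitz_on_def by blast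
  have LJ: "LJ \<ge> 0" using eJ(2) lipschitz_on_nonneg by blast
  define C where "C = norm (a x) + LJ * eJ"
  have C0: "C \<ge> 0" using LJ eJ by (simp add: C_def)
  have aB: "norm (a z) \<le> C" if z: "z \<in> ball x eJ" for z
  proof -
    have "dist (a z) (a x) \<le> LJ * dist z x" by (rule lipschitz_onD[OF eJ(2)]) (use z eJ in auto)
    also have "\<dots> \<le> LJ * eJ" using z LJ by (intro mult_left_mono) (auto simp: dist_commute)
    finally have "norm (a z - a x) \<le> LJ * eJ" by (simp add: dist_norm)
    moreover have "norm (a z) \<le> norm (a x) + norm (a z - a x)" by (metis norm_triangle_sub add.commute)
    ultimately show ?thesis unfolding C_def by linarith
  qed
  have lipc: "lipschitz_on C (ball x eJ) cj"
  proof (rule bounded_derivative_imp_lipschitz)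
    show "(cj has_derivative (\<lambda>v. a z \<bullet> v)) (at z within ball x eJ)" for z
      using deriv[of z] by (rule has_derivative_at_withinI)
    show "convex (ball x eJ)" by simp
    show "onorm (\<lambda>v. a z \<bullet> v) \<le> C" if "z \<in> ball x eJ" for z
    proof (rule onorm_le)
      fix v
      have "norm (a z \<bullet> v) \<le> norm (a z) * norm v" using Cauchy_Schwarz_ineq2 by simp
      also have "\<dots> \<le> C * norm v" using aB[OF that] by (intro mult_right_mono) auto
      finally show "norm (a z \<bullet> v) \<le> C * norm v" .
    qed
    show "0 \<le> C" by (fact C0)
  qed
  define e where "e = min eJ (d / (C + 1))"
  have e: "e > 0" using eJ d C0 by (simp add: e_def)
  define U where "U = ball x e \<inter> {z. cj z < 0}"
  have UB: "U \<subseteq> ball x eJ" by (auto simp: U_def e_def)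
  have lipcU: "lipschitz_on C U cj" by (rule lipschitz_on_subset[OF lipc UB])
  have xU: "x \<in> ball x eJ" using eJ by simp
  have img: "cj ` U \<subseteq> K"
  proof
    fix t assume "t \<in> cj ` U"
    then obtain z where z: "z \<in> U" "t = cj z" by blast
    have "dist (cj z) (cj x) \<le> C * dist z x" by (rule lipschitz_onD[OF lipc]) (use z UB xU in auto)
    also have "\<dots> \<le> C * (d / (C + 1))"
      using z C0 by (intro mult_left_mono) (auto simp: U_def e_def dist_commute)
    also have "\<dots> \<le> d"
    proof -
      have "C * (d / (C + 1)) = d * (C / (C + 1))" by simp
      also have "\<dots> \<le> d * 1" using C0 d by (intro mult_left_mono) auto
      finally show ?thesis by simp
    qed
    finally show "t \<in> K" using z by (simp add: K_def dist_commute)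
  qed
  have "lipschitz_on (M * C) U (\<lambda>z. bp (cj z))"
    by (rule lipschitz_on_compose2[OF lipcU lipschitz_on_subset[OF lipb img]])
  then show "\<exists>e>0. \<exists>L. lipschitz_on L (ball x e \<inter> {z. cj z < 0}) (\<lambda>z. bp (cj z))"
    using e unfolding U_def by blast
qed


theorem lemma3p2:
  fixes f :: "real^'n \<Rightarrow> real"
    and g :: "real^'n \<Rightarrow> ereal"
    and c :: "real^'n \<Rightarrow> real^'m"
    and b :: "real \<Rightarrow> ereal"
    and \<mu> :: real
  assumes f_grad: "loc_lip_gradient_on UNIV f"
    and g_proper: "proper_fun g"
    and g_lsc: "lsc_fun g"
    and g_proxbdd: "\<exists>\<gamma>>0. \<exists>B::real. \<forall>x. ereal B \<le> g x + ereal (norm x ^ 2 / (2 * \<gamma>))"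
    and g_cont_dom: "\<And>X x. (\<forall>k. X k \<in> edom g) \<Longrightarrow> X \<longlonglongrightarrow> x \<Longrightarrow> (\<lambda>k. g (X k)) \<longlonglongrightarrow> g x"
    and c_jac: "loc_lip_jacobian c"
    and inf_finite: "\<bar>INF x\<in>{x. \<forall>i. c x $ i \<le> 0}. ereal (f x) + g x\<bar> \<noteq> \<infinity>"
    and F_nonempty: "edom (\<lambda>x. ereal (f x) + g x) \<inter> {x. \<forall>i. c x $ i < 0} \<noteq> {}"
    and b_nonneg: "\<And>t. b t \<ge> 0"
    and b_dom: "edom b = {..<0}"
    and b_C2: "\<exists>b' b''. (\<forall>t<0. ((\<lambda>s. real_of_ereal (b s)) has_real_derivative b' t) (at t)
                                 \<and> (b' has_real_derivative b'' t) (at t) \<and> b' t > 0)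
                       \<and> continuous_on {..<0} b''"
    and b_blowup: "filterlim (\<lambda>t. real_of_ereal (b t)) at_top (at_left 0)"
    and mu_pos: "\<mu> > 0"
  shows "proper_fun (q_mu f g b c \<mu>) \<and> lsc_fun (q_mu f g b c \<mu>)
         \<and> edom (q_mu f g b c \<mu>) = edom g \<inter> {z. \<forall>i. c z $ i < 0}
         \<and> \<bar>INF z. q_mu f g b c \<mu> z\<bar> \<noteq> \<infinity>
         \<and> edom (f_mu f b c \<mu>) = {z. \<forall>i. c z $ i < 0}
         \<and> loc_lip_gradient_on {z. \<forall>i. c z $ i < 0} (\<lambda>z. real_of_ereal (f_mu f b c \<mu> z))"
proof -
  obtain b' b'' where bd1: "\<And>t. t < 0 \<Longrightarrow> ((\<lambda>s. real_of_ereal (b s)) has_real_derivative b' t) (at t)"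
    and bd2: "\<And>t. t < 0 \<Longrightarrow> (b' has_real_derivative b'' t) (at t)"
    and bcont: "continuous_on {..<0} b''"
    using b_C2 by blast
  define \<beta> where "\<beta> = (\<lambda>s. real_of_ereal (b s))"
  obtain Gf where Gf: "\<And>x. (f has_derivative (\<lambda>v. Gf x \<bullet> v)) (at x)" and Gfl: "loc_lipschitz_on UNIV Gf"
    using f_grad unfolding loc_lip_gradient_on_def by blast
  obtain J :: "real^'n \<Rightarrow> real^'n^'m" where J: "\<And>x. (c has_derivative (\<lambda>v. J x *v v)) (at x)"
    and Jl: "loc_lipschitz_on UNIV J"
    using c_jac unfolding loc_lip_jacobian_def by blast
  define S where "S = {z. \<forall>i. c z $ i < 0}"
  have bfin: "b t = ereal (\<beta> t)" if "t < 0" for t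
  proof -
    have "b t \<noteq> \<infinity>" using b_dom that unfolding edom_def by auto
    moreover have "b t \<noteq> -\<infinity>" using b_nonneg[of t] by auto
    ultimately show ?thesis unfolding \<beta>_def by (cases "b t") auto
  qed
  have binf: "b t = \<infinity>" if "\<not> t < 0" for t
    using b_dom that unfolding edom_def by auto
  have \<beta>nn: "\<beta> t \<ge> 0" for t unfolding \<beta>_def by (rule real_of_ereal_pos[OF b_nonneg])
  have fmu_eq: "f_mu f b c \<mu> z = (if z \<in> S then ereal (f z + \<mu> * (\<Sum>i\<in>UNIV. \<beta> (c z $ i))) else \<infinity>)" for z
  proof (cases "z \<in> S")
    case True
    then have "(\<Sum>i\<in>UNIV. b (c z $ i)) = (\<Sum>i\<in>UNIV. ereal (\<beta> (c z $ i)))"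
      by (intro sum.cong) (auto simp: S_def bfin)
    then show ?thesis using True by (simp add: f_mu_def)
  next
    case False
    then obtain i where "\<not> c z $ i < 0" by (auto simp: S_def)
    then have "b (c z $ i) = \<infinity>" using binf by blast
    then have "(\<Sum>i\<in>UNIV. b (c z $ i)) = \<infinity>" by (auto simp: sum_Pinfty)
    then show ?thesis using False mu_pos by (simp add: f_mu_def)
  qed
  have gninf: "g z \<noteq> -\<infinity>" for z using g_proper unfolding proper_fun_def by auto
  have q_eq: "q_mu f g b c \<mu> z = (if z \<in> S then ereal (f z + \<mu> * (\<Sum>i\<in>UNIV. \<beta> (c z $ i))) + g z else \<infinity>)" for z
    using gninf[of z] by (simp add: q_mu_def fmu_eq)
  define \<phi> where "\<phi> = (\<lambda>z. f z + \<mu> * (\<Sum>i\<in>UNIV. \<beta> (c z $ i)))"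
  have cj_der: "((\<lambda>z. c z $ i) has_derivative (\<lambda>v. J x $ i \<bullet> v)) (at x)" for x i
    using bounded_linear.has_derivative[OF bounded_linear_vec_nth[where i=i] J[where x=x]]
    by (simp add: matrix_vector_mul_component)
  have cj_cont: "continuous_on UNIV (\<lambda>z. c z $ i)" for i
    by (rule continuous_at_imp_continuous_on) (use has_derivative_continuous[OF cj_der] in blast)
  have cj_tend: "((\<lambda>z. c z $ i) \<longlongrightarrow> c x $ i) (at x)" for x i
    using has_derivative_continuous[OF cj_der[where x=x and i=i]] by (simp add: continuous_at)
  have f_tend: "(f \<longlongrightarrow> f x) (at x)" for x
    using has_derivative_continuous[OF Gf[of x]] by (simp add: continuous_at)
  have S_open: "open S"
  proof -
    have "S = (\<Inter>i\<in>UNIV. {z. c z $ i < (\<lambda>_. 0) z})" by (auto simp: S_def)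
    then show ?thesis by (auto intro!: open_INT open_Collect_less cj_cont continuous_on_const)
  qed
  define G where "G = (\<lambda>z. Gf z + \<mu> *\<^sub>R (\<Sum>i\<in>UNIV. b' (c z $ i) *\<^sub>R J z $ i))"
  have phi_der: "(\<phi> has_derivative (\<lambda>v. G x \<bullet> v)) (at x)" if "x \<in> S" for x
  proof -
    have bder: "(\<beta> has_derivative (*) (b' (c x $ i))) (at (c x $ i))" for i
      using bd1[of "c x $ i"] that by (auto simp: S_def \<beta>_def has_field_derivative_def)
    have "(\<phi> has_derivative (\<lambda>v. Gf x \<bullet> v + \<mu> * (\<Sum>i\<in>UNIV. b' (c x $ i) * (J x $ i \<bullet> v)))) (at x)"
      unfolding \<phi>_def
      by (intro has_derivative_add Gf has_derivative_mult_right has_derivative_sum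
          has_derivative_compose[OF cj_der bder])
    then show ?thesis
      by (rule has_derivative_eq_rhs)
        (simp add: G_def inner_add_left inner_sum_left inner_scaleR_left fun_eq_iff)
  qed
  have Jrow: "loc_lipschitz_on UNIV (\<lambda>z. J z $ i)" for i
    unfolding loc_lipschitz_on_def
  proof
    fix x :: "real^'n" assume "x \<in> UNIV"
    obtain e L where e: "e > 0" "lipschitz_on L (ball x e \<inter> UNIV) J"
      using Jl unfolding loc_lipschitz_on_def by blast
    have "lipschitz_on L (ball x e \<inter> UNIV) (\<lambda>z. J z $ i)"
      using e(2) unfolding lipschitz_on_def using dist_vec_nth_le order_trans by blast
    then show "\<exists>e>0. \<exists>L. lipschitz_on L (ball x e \<inter> UNIV) (\<lambda>z. J z $ i)" using e by blast
  qed
  have bpl: "loc_lipschitz_on S (\<lambda>z. b' (c z $ i))" for i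
  proof (rule ll_subset)
    show "loc_lipschitz_on {z. c z $ i < 0} (\<lambda>z. b' (c z $ i))"
      by (rule ll_bprime[OF cj_der Jrow bd2 bcont])
    show "S \<subseteq> {z. c z $ i < 0}" by (auto simp: S_def)
  qed
  have Gl: "loc_lipschitz_on S G"
    unfolding G_def
    by (intro ll_add ll_subset[OF Gfl] ll_scaleR ll_const ll_sum bpl ll_subset[OF Jrow]) auto
  have grad: "loc_lip_gradient_on S (\<lambda>z. real_of_ereal (f_mu f b c \<mu> z))"
    unfolding loc_lip_gradient_on_def
  proof (intro exI conjI ballI)
    fix x assume x: "x \<in> S"
    show "((\<lambda>z. real_of_ereal (f_mu f b c \<mu> z)) has_derivative (\<lambda>v. G x \<bullet> v)) (at x)"
      by (rule has_derivative_transform_within_open[OF phi_der[OF x] S_open x])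
        (simp add: fmu_eq \<phi>_def)
  qed (fact Gl)
  have q_phi: "q_mu f g b c \<mu> z = (if z \<in> S then ereal (\<phi> z) + g z else \<infinity>)" for z
    by (simp add: q_eq \<phi>_def)
  have phi_ge: "\<phi> z \<ge> f z" for z
    unfolding \<phi>_def using mu_pos \<beta>nn by (simp add: sum_nonneg)
  have qninf: "q_mu f g b c \<mu> z \<noteq> -\<infinity>" for z
    using gninf[of z] by (simp add: q_phi)
  obtain x0 where x0: "ereal (f x0) + g x0 \<noteq> \<infinity>" "x0 \<in> S"
    using F_nonempty unfolding edom_def S_def by blast
  have gx0: "g x0 \<noteq> \<infinity>" using x0(1) by auto
  have qx0: "q_mu f g b c \<mu> x0 \<noteq> \<infinity>" using x0 gx0 by (simp add: q_phi)
  have proper: "proper_fun (q_mu f g b c \<mu>)"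
    unfolding proper_fun_def using qninf qx0 by blast
  have edq: "edom (q_mu f g b c \<mu>) = edom g \<inter> {z. \<forall>i. c z $ i < 0}"
    unfolding edom_def using gninf by (auto simp: q_phi S_def)
  have edf: "edom (f_mu f b c \<mu>) = {z. \<forall>i. c z $ i < 0}"
    unfolding edom_def by (auto simp: fmu_eq S_def)
  have inf: "\<bar>INF z. q_mu f g b c \<mu> z\<bar> \<noteq> \<infinity>"
  proof -
    define m where "m = (INF x\<in>{x. \<forall>i. c x $ i \<le> 0}. ereal (f x) + g x)"
    have m: "m \<noteq> -\<infinity>" using inf_finite unfolding m_def by auto
    have "m \<le> q_mu f g b c \<mu> z" for z
    proof (cases "z \<in> S")
      case True
      then have "m \<le> ereal (f z) + g z" unfolding m_def
        by (intro INF_lower) (auto simp: S_def less_imp_le)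
      also have "\<dots> \<le> ereal (\<phi> z) + g z" using phi_ge[of z] by (intro add_right_mono) simp
      finally show ?thesis using True by (simp add: q_phi)
    qed (simp add: q_phi)
    then have "m \<le> (INF z. q_mu f g b c \<mu> z)" by (intro INF_greatest)
    then have "(INF z. q_mu f g b c \<mu> z) \<noteq> -\<infinity>" using m by auto
    moreover have "(INF z. q_mu f g b c \<mu> z) \<le> q_mu f g b c \<mu> x0" by (rule INF_lower) simp
    then have "(INF z. q_mu f g b c \<mu> z) \<noteq> \<infinity>" using qx0 by auto
    ultimately show ?thesis by auto
  qed
  have glsc: "\<And>x y. y < g x \<Longrightarrow> eventually (\<lambda>z. y < g z) (at x)"
    using g_lsc unfolding lsc_fun_def le_Liminf_iff by blast
  have phi_tend: "(\<phi> \<longlongrightarrow> \<phi> x) (at x)" if "x \<in> S" for x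
    using has_derivative_continuous[OF phi_der[OF that]] by (simp add: continuous_at)
  have S_ev: "eventually (\<lambda>z. z \<in> S) (at x)" if "x \<in> S" for x
    using S_open that by (auto simp: eventually_at_topological intro!: exI[of _ S])
  have key: "\<And>a r' X yr. ereal r' < X \<Longrightarrow> yr < a + r' \<Longrightarrow> ereal yr < ereal a + X"
  proof -
    fix a r' yr and X :: ereal
    assume "ereal r' < X" "yr < a + r'"
    then show "ereal yr < ereal a + X" by (cases X) auto
  qed
  have lsc: "lsc_fun (q_mu f g b c \<mu>)"
    unfolding lsc_fun_def le_Liminf_iff
  proof (intro allI impI)
    fix x y assume y: "y < q_mu f g b c \<mu> x"
    show "eventually (\<lambda>z. y < q_mu f g b c \<mu> z) (at x)"
    proof (cases y)
      case MInf
      then show ?thesis using qninf by (intro always_eventually) simp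
    next
      case PInf
      then show ?thesis using y by simp
    next
      case (real yr)
      obtain r where r: "ereal r < g x"
      proof (cases "g x")
        case (real s)
        then show ?thesis using that[of "s - 1"] by simp
      next
        case PInf
        then show ?thesis using that[of 0] by simp
      next
        case MInf
        then show ?thesis using gninf by simp
      qed
      have gev: "eventually (\<lambda>z. ereal r < g z) (at x)" by (rule glsc[OF r])
      show ?thesis
      proof (cases "x \<in> S")
        case True
        have yq: "ereal yr < ereal (\<phi> x) + g x" using y True real by (simp add: q_phi)
        obtain r' where r': "ereal r' < g x" "yr < \<phi> x + r'"
        proof (cases "g x")
          case (real s)
          then have "yr < \<phi> x + s" using yq by simp
          moreover have "yr < \<phi> x + (s - (\<phi> x + s - yr) / 2)" using \<open>yr < \<phi> x + s\<close> by (simp add: field_simps)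
          ultimately show ?thesis using real that[of "s - (\<phi> x + s - yr) / 2"] by simp
        next
          case PInf
          then show ?thesis using that[of "yr - \<phi> x + 1"] by simp
        next
          case MInf
          then show ?thesis using gninf by simp
        qed
        define dd where "dd = \<phi> x + r' - yr"
        have dd: "dd > 0" using r' by (simp add: dd_def)
        have e1: "eventually (\<lambda>z. \<phi> x - dd < \<phi> z) (at x)"
          by (rule order_tendstoD(1)[OF phi_tend[OF True]]) (use dd in simp)
        have e2: "eventually (\<lambda>z. ereal r' < g z) (at x)" by (rule glsc[OF r'(1)])
        show ?thesis using e1 e2 S_ev[OF True]
        proof eventually_elim
          case (elim z)
          have "yr < \<phi> z + r'" using elim(1) by (simp add: dd_def)
          then show ?case using key[OF elim(2)] elim(3) real by (simp add: q_phi)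
        qed
      next
        case False
        then obtain j where j: "\<not> c x $ j < 0" by (auto simp: S_def)
        show ?thesis
        proof (cases "c x $ j > 0")
          case True
          have "eventually (\<lambda>z. 0 < c z $ j) (at x)"
            by (rule order_tendstoD(1)[OF cj_tend True])
          then show ?thesis
          proof eventually_elim
            case (elim z)
            then have "z \<notin> S" unfolding S_def using not_less_iff_gr_or_eq by blast
            then show ?case using real by (simp add: q_phi)
          qed
        next
          case False
          then have cj0: "c x $ j = 0" using j by simp
          define K where "K = (yr - r - f x + 1) / \<mu>"
          have "eventually (\<lambda>t. K \<le> \<beta> t) (at_left 0)"
            using b_blowup unfolding filterlim_at_top \<beta>_def by blast
          then obtain b0 where b0: "b0 < 0" "\<And>t. b0 < t \<Longrightarrow> t < 0 \<Longrightarrow> K \<le> \<beta> t"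
            unfolding eventually_at_left_field by blast
          have e1: "eventually (\<lambda>z. b0 < c z $ j) (at x)"
            by (rule order_tendstoD(1)[OF cj_tend]) (use b0 cj0 in simp)
          have e2: "eventually (\<lambda>z. f x - 1 < f z) (at x)"
            by (rule order_tendstoD(1)[OF f_tend]) simp
          show ?thesis using e1 e2 gev
          proof eventually_elim
            case (elim z)
            show ?case
            proof (cases "z \<in> S")
              case True
              then have czj: "c z $ j < 0" by (simp add: S_def)
              have "\<beta> (c z $ j) \<le> (\<Sum>i\<in>UNIV. \<beta> (c z $ i))"
                by (rule member_le_sum) (auto simp: \<beta>nn)
              then have "\<mu> * K \<le> \<mu> * (\<Sum>i\<in>UNIV. \<beta> (c z $ i))"
                using b0(2)[OF elim(1) czj] mu_pos by (intro mult_left_mono) auto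
              moreover have "\<mu> * K = yr - r - f x + 1" using mu_pos by (simp add: K_def)
              ultimately have "yr < \<phi> z + r" using elim(2) by (simp add: \<phi>_def)
              then show ?thesis using key[OF elim(3)] True real by (simp add: q_phi)
            next
              case False
              then show ?thesis using real by (simp add: q_phi)
            qed
          qed
        qed
      qed
    qed
  qed
  show ?thesis using proper lsc edq inf edf grad S_def by simp
qed

end
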